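(* Fix $a>0$ and $\delta\in(0,1)$. For $T\ge1$ define the random set $$C_T=\{\beta\in\mathbb R : S_T^\beta \le 1/\delta\},$$ where $$S_T^\beta = \frac{1}{\sqrt{a^2\Gamma_0(T)+1}}\exp\!\left(\frac{a^2(\Gamma_1(T)-\beta\Gamma_0(T))^2}{2(a^2\Gamma_0(T)+1)}\right).$$ Then: (i) whenever $\Gamma_0(T)>0$, $$C_T=\left\{\beta : \left|\beta-\frac{\Gamma_1(T)}{\Gamma_0(T)}\right| \le \sqrt{\frac{a^2\Gamma_0(T)+1}{a^2\Gamma_0(T)^2}\ln\frac{a^2\Gamma_0(T)+1}{\delta^2}}\right\};$$ (ii) for every $\alpha\in\mathbb R$, $$\mathbb P_\alpha\Big(\alpha\in\bigcap_{T=1}^\infty C_T\Big)\ge 1-\delta.$$ That is, the sets $C_T$ form strong $(1-\delta)$-confidence intervals for $\alpha$.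
   Context: Autoregressive model: $y_0$ is a fixed real constant, and $y_t = \alpha y_{t-1} + \epsilon_t$ for $t=1,2,\dots$, where the innovations $\epsilon_1,\epsilon_2,\dots$ are independent $N(0,1)$ random variables. $\mathbb{P}_\alpha$ denotes the probability measure of this model with coefficient $\alpha\in\mathbb R$. For $T\ge1$ set $\Gamma_0(T)=\sum_{t=1}^T y_{t-1}^2$ and $\Gamma_1(T)=\sum_{t=1}^T y_{t-1}y_t$. *)

theory Defs
  imports "HOL-Probability.Probability"
begin

text \<open>AR(1) path: y_0 = y0, y_t = alpha * y_(t-1) + e t for t >= 1
  (the value e 0 is never used; innovations are e 1, e 2, ...).\<close>
fun ar_path :: "real \<Rightarrow> real \<Rightarrow> (nat \<Rightarrow> real) \<Rightarrow> nat \<Rightarrow> real" where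
  "ar_path \<alpha> y0 e 0 = y0"
| "ar_path \<alpha> y0 e (Suc t) = \<alpha> * ar_path \<alpha> y0 e t + e (Suc t)"

definition Gamma0 :: "real \<Rightarrow> real \<Rightarrow> (nat \<Rightarrow> real) \<Rightarrow> nat \<Rightarrow> real" where
  "Gamma0 \<alpha> y0 e T = (\<Sum>t=1..T. (ar_path \<alpha> y0 e (t - 1))\<^sup>2)"

definition Gamma1 :: "real \<Rightarrow> real \<Rightarrow> (nat \<Rightarrow> real) \<Rightarrow> nat \<Rightarrow> real" where
  "Gamma1 \<alpha> y0 e T = (\<Sum>t=1..T. ar_path \<alpha> y0 e (t - 1) * ar_path \<alpha> y0 e t)"

definition S_stat :: "real \<Rightarrow> real \<Rightarrow> real \<Rightarrow> real \<Rightarrow> real" where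
  "S_stat a \<beta> G0 G1 =
     1 / sqrt (a\<^sup>2 * G0 + 1) * exp (a\<^sup>2 * (G1 - \<beta> * G0)\<^sup>2 / (2 * (a\<^sup>2 * G0 + 1)))"

definition conf_set :: "real \<Rightarrow> real \<Rightarrow> real \<Rightarrow> real \<Rightarrow> real set" where
  "conf_set a \<delta> G0 G1 = {\<beta>. S_stat a \<beta> G0 G1 \<le> 1 / \<delta>}"

end

theory Submission
  imports Defs
begin

definition Sf :: "real \<Rightarrow> real \<Rightarrow> real \<Rightarrow> real" where
  "Sf a g m = 1 / sqrt (a\<^sup>2 * g + 1) * exp (a\<^sup>2 * m\<^sup>2 / (2 * (a\<^sup>2 * g + 1)))"

lemma S_stat_Sf: "S_stat a \<beta> G0 G1 = Sf a G0 (G1 - \<beta> * G0)"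
  by (simp add: S_stat_def Sf_def)

lemma part1:
  fixes a \<delta> G0 G1 :: real
  assumes a: "a > 0" and d: "0 < \<delta>" "\<delta> < 1" and G: "G0 > 0"
  shows "conf_set a \<delta> G0 G1 = {\<beta>. \<bar>\<beta> - G1 / G0\<bar> \<le>
              sqrt ((a\<^sup>2 * G0 + 1) / (a\<^sup>2 * G0\<^sup>2) * ln ((a\<^sup>2 * G0 + 1) / \<delta>\<^sup>2))}"
proof -
  define v where "v = a\<^sup>2 * G0 + 1"
  have v1: "v > 1" using a G by (simp add: v_def)
  have vd: "v / \<delta>\<^sup>2 > 0" using v1 d by simp
  have lnv: "ln (v / \<delta>\<^sup>2) = 2 * ln (sqrt v / \<delta>)"
  proof -
    have "v / \<delta>\<^sup>2 = (sqrt v / \<delta>)\<^sup>2" using v1 by (simp add: power_divide)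
    then show ?thesis using v1 d by (simp add: ln_realpow)
  qed
  have R0: "0 \<le> v / (a\<^sup>2 * G0\<^sup>2) * ln (v / \<delta>\<^sup>2)"
  proof -
    have "1 < v / \<delta>\<^sup>2"
    proof -
      have "\<delta>\<^sup>2 < 1" using d by (simp add: power_less_one_iff)
      then have "\<delta>\<^sup>2 < v" using v1 by linarith
      then show ?thesis using d by simp
    qed
    then have "ln (v / \<delta>\<^sup>2) > 0" by simp
    then show ?thesis using v1 by simp
  qed
  have "(\<beta> \<in> conf_set a \<delta> G0 G1) \<longleftrightarrow> \<bar>\<beta> - G1 / G0\<bar> \<le> sqrt (v / (a\<^sup>2 * G0\<^sup>2) * ln (v / \<delta>\<^sup>2))" for \<beta>
  proof -
    have "(\<beta> \<in> conf_set a \<delta> G0 G1) \<longleftrightarrow> 1 / sqrt v * exp (a\<^sup>2 * (G1 - \<beta> * G0)\<^sup>2 / (2 * v)) \<le> 1 / \<delta>"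
      by (simp add: conf_set_def S_stat_def v_def)
    also have "\<dots> \<longleftrightarrow> exp (a\<^sup>2 * (G1 - \<beta> * G0)\<^sup>2 / (2 * v)) \<le> sqrt v / \<delta>"
      using v1 d by (simp add: field_simps)
    also have "\<dots> \<longleftrightarrow> a\<^sup>2 * (G1 - \<beta> * G0)\<^sup>2 / (2 * v) \<le> ln (sqrt v / \<delta>)"
      using v1 d by (subst ln_ge_iff[symmetric]) auto
    also have "\<dots> \<longleftrightarrow> (\<beta> - G1 / G0)\<^sup>2 \<le> v / (a\<^sup>2 * G0\<^sup>2) * ln (v / \<delta>\<^sup>2)"
    proof -
      have e: "(G1 - \<beta> * G0)\<^sup>2 = G0\<^sup>2 * (\<beta> - G1 / G0)\<^sup>2" using G
        by (simp add: field_simps power2_eq_square)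
      show ?thesis unfolding lnv e using v1 a G
        by (simp add: field_simps)
    qed
    also have "\<dots> \<longleftrightarrow> \<bar>\<beta> - G1 / G0\<bar> \<le> sqrt (v / (a\<^sup>2 * G0\<^sup>2) * ln (v / \<delta>\<^sup>2))"
      using R0 by (metis real_sqrt_abs real_sqrt_le_iff real_sqrt_le_mono abs_ge_zero real_le_rsqrt real_sqrt_pow2 power2_abs)
    finally show ?thesis .
  qed
  then show ?thesis by (auto simp: v_def)
qed

lemma gauss_pointwise:
  fixes a G0 M y z :: real
  assumes G: "G0 \<ge> 0"
  defines "v \<equiv> a\<^sup>2 * G0 + 1"
  defines "w \<equiv> v + a\<^sup>2 * y\<^sup>2"
  shows "std_normal_density z * Sf a (G0 + y\<^sup>2) (M + y * z) =
     Sf a G0 M * normal_density (a\<^sup>2 * M * y / v) (sqrt (w / v)) z"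
proof -
  have v: "v > 0" using G unfolding v_def by (simp add: add_nonneg_pos)
  have w: "w > 0" using v unfolding w_def by (simp add: add_pos_nonneg)
  have ww: "a\<^sup>2 * (G0 + y\<^sup>2) + 1 = w" by (simp add: w_def v_def algebra_simps)
  have E: "- z\<^sup>2 / 2 + a\<^sup>2 * (M + y * z)\<^sup>2 / (2 * w) =
       a\<^sup>2 * M\<^sup>2 / (2 * v) + - (z - a\<^sup>2 * M * y / v)\<^sup>2 / (2 * (sqrt (w / v))\<^sup>2)"
  proof -
    have s: "(sqrt (w / v))\<^sup>2 = w / v" using v w by simp
    have 1: "(z - a\<^sup>2 * M * y / v)\<^sup>2 / (2 * (w / v)) = (v * z - a\<^sup>2 * M * y)\<^sup>2 / (2 * v * w)"
      using v w by (simp add: field_simps power2_eq_square)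
    have 2: "- z\<^sup>2 / 2 + a\<^sup>2 * (M + y * z)\<^sup>2 / (2 * w) = (- z\<^sup>2 * v * w + a\<^sup>2 * v * (M + y * z)\<^sup>2) / (2 * v * w)"
      using v w by (simp add: field_simps)
    have 3: "a\<^sup>2 * M\<^sup>2 / (2 * v) + - ((v * z - a\<^sup>2 * M * y)\<^sup>2 / (2 * v * w)) = (a\<^sup>2 * M\<^sup>2 * w - (v * z - a\<^sup>2 * M * y)\<^sup>2) / (2 * v * w)"
      using v w by (simp add: field_simps)
    have 4: "- z\<^sup>2 * v * w + a\<^sup>2 * v * (M + y * z)\<^sup>2 = a\<^sup>2 * M\<^sup>2 * w - (v * z - a\<^sup>2 * M * y)\<^sup>2"
      unfolding w_def by (simp add: power2_eq_square algebra_simps)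
    have "- z\<^sup>2 / 2 + a\<^sup>2 * (M + y * z)\<^sup>2 / (2 * w) = (a\<^sup>2 * M\<^sup>2 * w - (v * z - a\<^sup>2 * M * y)\<^sup>2) / (2 * v * w)"
      using 2 4 by simp
    also have "\<dots> = a\<^sup>2 * M\<^sup>2 / (2 * v) + - ((z - a\<^sup>2 * M * y / v)\<^sup>2 / (2 * (w / v)))"
      using 3 1 by simp
    finally show ?thesis unfolding s by simp
  qed
  have C: "1 / sqrt (2 * pi) * (1 / sqrt w) = 1 / sqrt v * (1 / sqrt (2 * pi * (sqrt (w / v))\<^sup>2))"
    using v w by (simp add: real_sqrt_mult real_sqrt_divide field_simps)
  have "std_normal_density z * Sf a (G0 + y\<^sup>2) (M + y * z) =
     (1 / sqrt (2 * pi) * (1 / sqrt w)) * exp (- z\<^sup>2 / 2 + a\<^sup>2 * (M + y * z)\<^sup>2 / (2 * w))"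
    unfolding std_normal_density_def Sf_def ww exp_add by simp
  also have "\<dots> = (1 / sqrt v * (1 / sqrt (2 * pi * (sqrt (w / v))\<^sup>2))) *
      exp (a\<^sup>2 * M\<^sup>2 / (2 * v) + - (z - a\<^sup>2 * M * y / v)\<^sup>2 / (2 * (sqrt (w / v))\<^sup>2))"
    unfolding E C ..
  also have "\<dots> = Sf a G0 M * normal_density (a\<^sup>2 * M * y / v) (sqrt (w / v)) z"
    unfolding Sf_def normal_density_def exp_add v_def by simp
  finally show ?thesis .
qed

lemma nn_integral_normal_density: assumes "\<sigma> > 0" shows "(\<integral>\<^sup>+ z. ennreal (normal_density \<mu> \<sigma> z) \<partial>lborel) = 1"
proof -
  interpret prob_space "density lborel (normal_density \<mu> \<sigma>)" using assms by (rule prob_space_normal_density)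
  have "emeasure (density lborel (normal_density \<mu> \<sigma>)) UNIV = 1"
    using emeasure_space_1 by simp
  then show ?thesis by (simp add: emeasure_density)
qed

lemma gauss_integral:
  fixes a G0 M y :: real
  assumes G: "G0 \<ge> 0"
  shows "(\<integral>\<^sup>+ z. ennreal (std_normal_density z * Sf a (G0 + y\<^sup>2) (M + y * z)) \<partial>lborel) = ennreal (Sf a G0 M)"
proof -
  have Sp: "Sf a G0 M \<ge> 0" using G unfolding Sf_def by simp
  have "(\<integral>\<^sup>+ z. ennreal (std_normal_density z * Sf a (G0 + y\<^sup>2) (M + y * z)) \<partial>lborel) =
     (\<integral>\<^sup>+ z. ennreal (Sf a G0 M) * ennreal (normal_density (a\<^sup>2 * M * y / (a\<^sup>2 * G0 + 1)) (sqrt ((a\<^sup>2 * G0 + 1 + a\<^sup>2 * y\<^sup>2) / (a\<^sup>2 * G0 + 1))) z) \<partial>lborel)"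
    unfolding gauss_pointwise[OF G] using Sp by (simp add: ennreal_mult)
  also have "\<dots> = ennreal (Sf a G0 M)"
  proof -
    have "a\<^sup>2 * G0 + 1 > 0" using G by (simp add: add_nonneg_pos)
    then have "sqrt ((a\<^sup>2 * G0 + 1 + a\<^sup>2 * y\<^sup>2) / (a\<^sup>2 * G0 + 1)) > 0"
      by (simp add: add_pos_nonneg)
    then show ?thesis by (subst nn_integral_cmult) (auto simp: nn_integral_normal_density)
  qed
  finally show ?thesis .
qed

lemma Gamma0_Suc: "Gamma0 \<alpha> y0 e (Suc n) = Gamma0 \<alpha> y0 e n + (ar_path \<alpha> y0 e n)\<^sup>2"
  by (simp add: Gamma0_def)

lemma Gamma1_Suc: "Gamma1 \<alpha> y0 e (Suc n) = Gamma1 \<alpha> y0 e n + ar_path \<alpha> y0 e n * ar_path \<alpha> y0 e (Suc n)"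
  by (simp add: Gamma1_def)

lemma Gamma0_nonneg: "Gamma0 \<alpha> y0 e n \<ge> 0"
  by (simp add: Gamma0_def sum_nonneg)

lemma Mx_Suc: "Gamma1 \<alpha> y0 e (Suc n) - \<alpha> * Gamma0 \<alpha> y0 e (Suc n) =
   (Gamma1 \<alpha> y0 e n - \<alpha> * Gamma0 \<alpha> y0 e n) + ar_path \<alpha> y0 e n * e (Suc n)"
  by (simp add: Gamma0_Suc Gamma1_Suc algebra_simps power2_eq_square)

lemma ar_path_cong: "(\<And>s. 1 \<le> s \<Longrightarrow> s \<le> t \<Longrightarrow> x s = x' s) \<Longrightarrow> ar_path \<alpha> y0 x t = ar_path \<alpha> y0 x' t"
  by (induction t) auto

lemma Gamma0_cong: "(\<And>s. 1 \<le> s \<Longrightarrow> s \<le> T \<Longrightarrow> x s = x' s) \<Longrightarrow> Gamma0 \<alpha> y0 x T = Gamma0 \<alpha> y0 x' T"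
  unfolding Gamma0_def by (intro sum.cong refl arg_cong[where f="\<lambda>u. u\<^sup>2"] ar_path_cong) auto

lemma Gamma1_cong: "(\<And>s. 1 \<le> s \<Longrightarrow> s \<le> T \<Longrightarrow> x s = x' s) \<Longrightarrow> Gamma1 \<alpha> y0 x T = Gamma1 \<alpha> y0 x' T"
  unfolding Gamma1_def by (intro sum.cong refl arg_cong2[where f="(*)"] ar_path_cong) auto

definition Sx :: "real \<Rightarrow> real \<Rightarrow> real \<Rightarrow> (nat \<Rightarrow> real) \<Rightarrow> nat \<Rightarrow> real" where
  "Sx a \<alpha> y0 x T = S_stat a \<alpha> (Gamma0 \<alpha> y0 x T) (Gamma1 \<alpha> y0 x T)"

lemma Sx_cong: "(\<And>s. 1 \<le> s \<Longrightarrow> s \<le> T \<Longrightarrow> x s = x' s) \<Longrightarrow> Sx a \<alpha> y0 x T = Sx a \<alpha> y0 x' T"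
proof -
  assume h: "\<And>s. 1 \<le> s \<Longrightarrow> s \<le> T \<Longrightarrow> x s = x' s"
  show ?thesis unfolding Sx_def using Gamma0_cong[of T x x', OF h] Gamma1_cong[of T x x', OF h] by simp
qed

lemma Sx_nonneg: "Sx a \<alpha> y0 x T \<ge> 0"
proof -
  have "a\<^sup>2 * Gamma0 \<alpha> y0 x T + 1 > 0" using Gamma0_nonneg[of \<alpha> y0 x T]
    by (simp add: add_nonneg_pos)
  then show ?thesis unfolding Sx_def S_stat_def by simp
qed

lemma Sx_0: "Sx a \<alpha> y0 x 0 = 1"
  by (simp add: Sx_def S_stat_def Gamma0_def Gamma1_def)

lemma Sx_Suc: "Sx a \<alpha> y0 x (Suc n) = Sf a (Gamma0 \<alpha> y0 x n + (ar_path \<alpha> y0 x n)\<^sup>2)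
   ((Gamma1 \<alpha> y0 x n - \<alpha> * Gamma0 \<alpha> y0 x n) + ar_path \<alpha> y0 x n * x (Suc n))"
  unfolding Sx_def S_stat_Sf Mx_Suc by (simp add: Gamma0_Suc)

lemma Sx_Sf: "Sx a \<alpha> y0 x n = Sf a (Gamma0 \<alpha> y0 x n) (Gamma1 \<alpha> y0 x n - \<alpha> * Gamma0 \<alpha> y0 x n)"
  unfolding Sx_def S_stat_Sf ..

abbreviation N01 :: "real measure" where
  "N01 \<equiv> density lborel (\<lambda>z. ennreal (std_normal_density z))"

lemma sets_N01: "sets N01 = sets borel" by simp

lemma comp_meas: "i \<in> I \<Longrightarrow> (\<lambda>x. x i) \<in> borel_measurable (PiM I (\<lambda>_. N01))"
proof -
  assume i: "i \<in> I"
  have "(\<lambda>x. x i) \<in> measurable (PiM I (\<lambda>_. N01)) ((\<lambda>_. N01) i)"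
    by (rule measurable_component_singleton[OF i])
  moreover have "measurable (PiM I (\<lambda>_. N01)) N01 = measurable (PiM I (\<lambda>_. N01)) borel"
    by (rule measurable_cong_sets) auto
  ultimately show ?thesis by simp
qed

lemma ar_path_meas: "{1..t} \<subseteq> I \<Longrightarrow> (\<lambda>x. ar_path \<alpha> y0 x t) \<in> borel_measurable (PiM I (\<lambda>_. N01))"
proof (induction t)
  case 0 then show ?case by simp
next
  case (Suc t)
  then have "{1..t} \<subseteq> I" "Suc t \<in> I" by auto
  with Suc.IH comp_meas[of "Suc t" I] show ?case by simp
qed

lemma Gamma0_meas: assumes "{1..T} \<subseteq> I" shows "(\<lambda>x. Gamma0 \<alpha> y0 x T) \<in> borel_measurable (PiM I (\<lambda>_. N01))"
proof -
  have h: "{1..t - 1} \<subseteq> I" if "t \<le> T" for t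
  proof -
    have "{1..t - 1} \<subseteq> {1..T}" using that by auto
    then show ?thesis using assms by blast
  qed
  have h2: "{1..t} \<subseteq> I" if "t \<le> T" for t
  proof -
    have "{1..t} \<subseteq> {1..T}" using that by auto
    then show ?thesis using assms by blast
  qed
  show ?thesis unfolding Gamma0_def
    by (intro borel_measurable_sum borel_measurable_power ar_path_meas h h2) auto
qed

lemma Gamma1_meas: assumes "{1..T} \<subseteq> I" shows "(\<lambda>x. Gamma1 \<alpha> y0 x T) \<in> borel_measurable (PiM I (\<lambda>_. N01))"
proof -
  have h: "{1..t - 1} \<subseteq> I" if "t \<le> T" for t
  proof -
    have "{1..t - 1} \<subseteq> {1..T}" using that by auto
    then show ?thesis using assms by blast
  qed
  have h2: "{1..t} \<subseteq> I" if "t \<le> T" for t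
  proof -
    have "{1..t} \<subseteq> {1..T}" using that by auto
    then show ?thesis using assms by blast
  qed
  show ?thesis unfolding Gamma1_def
    by (intro borel_measurable_sum borel_measurable_times ar_path_meas h h2) auto
qed

lemma Sx_meas: "{1..T} \<subseteq> I \<Longrightarrow> (\<lambda>x. Sx a \<alpha> y0 x T) \<in> borel_measurable (PiM I (\<lambda>_. N01))"
  unfolding Sx_Sf Sf_def using Gamma0_meas[of T I \<alpha> y0] Gamma1_meas[of T I \<alpha> y0] by measurable

fun stay :: "real \<Rightarrow> real \<Rightarrow> real \<Rightarrow> real \<Rightarrow> (nat \<Rightarrow> real) \<Rightarrow> nat \<Rightarrow> bool" where
  "stay a \<alpha> y0 c x 0 = True"
| "stay a \<alpha> y0 c x (Suc n) = (stay a \<alpha> y0 c x n \<and> Sx a \<alpha> y0 x (Suc n) \<le> c)"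

fun Zp :: "real \<Rightarrow> real \<Rightarrow> real \<Rightarrow> real \<Rightarrow> (nat \<Rightarrow> real) \<Rightarrow> nat \<Rightarrow> real" where
  "Zp a \<alpha> y0 c x 0 = Sx a \<alpha> y0 x 0"
| "Zp a \<alpha> y0 c x (Suc n) = (if stay a \<alpha> y0 c x n then Sx a \<alpha> y0 x (Suc n) else Zp a \<alpha> y0 c x n)"

lemma stay_iff: "stay a \<alpha> y0 c x n \<longleftrightarrow> (\<forall>T\<in>{1..n}. Sx a \<alpha> y0 x T \<le> c)"
  by (induction n) (simp_all add: atLeastAtMostSuc_conv conj_commute)

lemma stay_cong: "(\<And>s. 1 \<le> s \<Longrightarrow> s \<le> n \<Longrightarrow> x s = x' s) \<Longrightarrow> stay a \<alpha> y0 c x n = stay a \<alpha> y0 c x' n"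
proof (induction n)
  case 0 then show ?case by simp
next
  case (Suc n)
  have S: "Sx a \<alpha> y0 x (Suc n) = Sx a \<alpha> y0 x' (Suc n)" by (rule Sx_cong) (use Suc.prems in auto)
  show ?case using Suc S by simp
qed

lemma Zp_cong: "(\<And>s. 1 \<le> s \<Longrightarrow> s \<le> n \<Longrightarrow> x s = x' s) \<Longrightarrow> Zp a \<alpha> y0 c x n = Zp a \<alpha> y0 c x' n"
proof (induction n)
  case 0 then show ?case by (simp add: Sx_0)
next
  case (Suc n)
  have s: "stay a \<alpha> y0 c x n = stay a \<alpha> y0 c x' n" by (rule stay_cong) (use Suc.prems in auto)
  have S: "Sx a \<alpha> y0 x (Suc n) = Sx a \<alpha> y0 x' (Suc n)" by (rule Sx_cong) (use Suc.prems in auto)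
  show ?case using Suc s S by simp
qed

lemma Zp_stay: "stay a \<alpha> y0 c x n \<Longrightarrow> Zp a \<alpha> y0 c x n = Sx a \<alpha> y0 x n"
  by (cases n) auto

lemma Zp_nonneg: "Zp a \<alpha> y0 c x n \<ge> 0"
  by (induction n) (auto simp: Sx_nonneg)

lemma Zp_ge: "c \<ge> 0 \<Longrightarrow> \<not> stay a \<alpha> y0 c x n \<Longrightarrow> Zp a \<alpha> y0 c x n \<ge> c"
  by (induction n) auto

lemma stay_meas: "{1..n} \<subseteq> I \<Longrightarrow> Measurable.pred (PiM I (\<lambda>_. N01)) (\<lambda>x. stay a \<alpha> y0 c x n)"
proof (induction n)
  case 0 then show ?case by simp
next
  case (Suc n)
  then have "{1..n} \<subseteq> I" by auto
  with Suc.IH Sx_meas[of "Suc n" I a \<alpha> y0] Suc.prems show ?case by simp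
qed

lemma Zp_meas: "{1..n} \<subseteq> I \<Longrightarrow> (\<lambda>x. Zp a \<alpha> y0 c x n) \<in> borel_measurable (PiM I (\<lambda>_. N01))"
proof (induction n)
  case 0 then show ?case by (simp add: Sx_0)
next
  case (Suc n)
  then have "{1..n} \<subseteq> I" by auto
  with Suc.IH Sx_meas[of "Suc n" I a \<alpha> y0] stay_meas[of n I a \<alpha> y0 c] Suc.prems show ?case by simp
qed

locale arsetup = prob_space M for M :: "'w measure" +
  fixes \<epsilon> :: "nat \<Rightarrow> 'w \<Rightarrow> real"
  assumes indep: "indep_vars (\<lambda>_. borel) \<epsilon> {1..}"
    and normal: "\<And>t. t \<ge> 1 \<Longrightarrow> distributed M lborel (\<epsilon> t) std_normal_density"
begin

lemma eps_meas: "i \<ge> 1 \<Longrightarrow> \<epsilon> i \<in> measurable M N01"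
proof -
  assume "i \<ge> 1"
  then have 1: "\<epsilon> i \<in> measurable M lborel" by (rule distributed_measurable[OF normal])
  have eq: "measurable M lborel = measurable M N01"
    by (rule measurable_cong_sets[OF refl]) (simp only: sets_density sets_lborel)
  show ?thesis using 1 unfolding eq .
qed

lemma restr_meas: "I \<subseteq> {1..} \<Longrightarrow> (\<lambda>\<omega>. \<lambda>i\<in>I. \<epsilon> i \<omega>) \<in> measurable M (PiM I (\<lambda>_. N01))"
  by (intro measurable_restrict eps_meas) (simp add: subset_iff)

lemma distr_N01: "i \<ge> 1 \<Longrightarrow> distr M borel (\<epsilon> i) = N01"
proof -
  assume i: "i \<ge> 1"
  have "distr M borel (\<epsilon> i) = distr M lborel (\<epsilon> i)" by (rule distr_cong) (simp_all only: sets_lborel refl)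
  also have "\<dots> = N01" using distributed_distr_eq_density[OF normal[OF i]] .
  finally show ?thesis .
qed

lemma transfer:
  fixes F :: "(nat \<Rightarrow> real) \<Rightarrow> ennreal"
  assumes I: "finite I" "I \<subseteq> {1..}" and F: "F \<in> borel_measurable (PiM I (\<lambda>_. N01))"
  shows "(\<integral>\<^sup>+\<omega>. F (\<lambda>i\<in>I. \<epsilon> i \<omega>) \<partial>M) = (\<integral>\<^sup>+x. F x \<partial>PiM I (\<lambda>_. N01))"
proof cases
  assume e: "I = {}"
  have r: "(\<lambda>i\<in>I. \<epsilon> i \<omega>) = (\<lambda>_. undefined)" for \<omega> using e by auto
  show ?thesis unfolding r using e by (simp add: PiM_empty nn_integral_count_space_finite emeasure_space_1)
next
  assume ne: "I \<noteq> {}"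
  have rv: "random_variable borel (\<epsilon> i)" if "i \<in> I" for i
    using distributed_measurable[OF normal, of i] that I by auto
  have ind: "indep_vars (\<lambda>_. borel) \<epsilon> I" using indep_vars_subset[OF indep I(2)] .
  have "distr M (PiM I (\<lambda>_. borel)) (\<lambda>x. \<lambda>i\<in>I. \<epsilon> i x) = PiM I (\<lambda>i. distr M borel (\<epsilon> i))"
    using indep_vars_iff_distr_eq_PiM'[OF ne rv] ind by simp
  also have "\<dots> = PiM I (\<lambda>_. N01)"
  proof (rule PiM_cong[OF refl])
    fix i assume "i \<in> I" then have "i \<ge> 1" using I by auto
    then show "distr M borel (\<epsilon> i) = N01" by (rule distr_N01)
  qed
  finally have D: "distr M (PiM I (\<lambda>_. borel)) (\<lambda>x. \<lambda>i\<in>I. \<epsilon> i x) = PiM I (\<lambda>_. N01)" .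
  have D': "distr M (PiM I (\<lambda>_. N01)) (\<lambda>x. \<lambda>i\<in>I. \<epsilon> i x) = PiM I (\<lambda>_. N01)"
  proof -
    have "distr M (PiM I (\<lambda>_. N01)) (\<lambda>x. \<lambda>i\<in>I. \<epsilon> i x) = distr M (PiM I (\<lambda>_. borel)) (\<lambda>x. \<lambda>i\<in>I. \<epsilon> i x)"
      by (rule distr_cong[OF refl sets_PiM_cong[OF refl sets_N01] refl])
    then show ?thesis using D by simp
  qed
  have "(\<integral>\<^sup>+x. F x \<partial>PiM I (\<lambda>_. N01)) = (\<integral>\<^sup>+x. F x \<partial>distr M (PiM I (\<lambda>_. N01)) (\<lambda>x. \<lambda>i\<in>I. \<epsilon> i x))"
    unfolding D' ..
  also have "\<dots> = (\<integral>\<^sup>+\<omega>. F (\<lambda>i\<in>I. \<epsilon> i \<omega>) \<partial>M)"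
    by (rule nn_integral_distr[OF restr_meas[OF I(2)]], unfold D', rule F)
  finally show ?thesis ..
qed

lemma meas_M:
  fixes f :: "(nat \<Rightarrow> real) \<Rightarrow> 'b::topological_space"
  assumes f: "f \<in> borel_measurable (PiM {1..n} (\<lambda>_. N01))"
    and c: "\<And>x x'. (\<And>s. 1 \<le> s \<Longrightarrow> s \<le> n \<Longrightarrow> x s = x' s) \<Longrightarrow> f x = f x'"
  shows "(\<lambda>\<omega>. f (\<lambda>t. \<epsilon> t \<omega>)) \<in> borel_measurable M"
proof -
  have "(\<lambda>\<omega>. f (\<lambda>t. \<epsilon> t \<omega>)) = (\<lambda>\<omega>. f (\<lambda>i\<in>{1..n}. \<epsilon> i \<omega>))"
    by (rule ext, rule c) auto
  also have "\<dots> \<in> borel_measurable M"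
    using measurable_comp[OF restr_meas f] by (simp add: comp_def)
  finally show ?thesis .
qed

end

lemma sf_N01: "sigma_finite_measure N01"
  by (rule prob_space_imp_sigma_finite, rule prob_space_normal_density, simp)

lemma N01_integral:
  fixes f :: "real \<Rightarrow> ennreal"
  assumes "f \<in> borel_measurable borel"
  shows "(\<integral>\<^sup>+z. f z \<partial>N01) = (\<integral>\<^sup>+z. ennreal (std_normal_density z) * f z \<partial>lborel)"
  by (rule nn_integral_density) (use assms in auto)

context arsetup
begin

lemma key:
  fixes g :: "(nat \<Rightarrow> real) \<Rightarrow> real"
  assumes gm: "g \<in> borel_measurable (PiM {1..n} (\<lambda>_. N01))"
    and g0: "\<And>x. g x \<ge> 0"
    and gc: "\<And>x x'. (\<And>s. 1 \<le> s \<Longrightarrow> s \<le> n \<Longrightarrow> x s = x' s) \<Longrightarrow> g x = g x'"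
  shows "(\<integral>\<^sup>+\<omega>. ennreal (g (\<lambda>t. \<epsilon> t \<omega>) * Sx a \<alpha> y0 (\<lambda>t. \<epsilon> t \<omega>) (Suc n)) \<partial>M) =
         (\<integral>\<^sup>+\<omega>. ennreal (g (\<lambda>t. \<epsilon> t \<omega>) * Sx a \<alpha> y0 (\<lambda>t. \<epsilon> t \<omega>) n) \<partial>M)"
proof -
  define F where "F x = ennreal (g x * Sx a \<alpha> y0 x (Suc n))" for x
  define H where "H x = ennreal (g x * Sx a \<alpha> y0 x n)" for x
  have Fr: "F (\<lambda>t. \<epsilon> t \<omega>) = F (\<lambda>i\<in>{1..Suc n}. \<epsilon> i \<omega>)" for \<omega>
  proof -
    have "g (\<lambda>t. \<epsilon> t \<omega>) = g (\<lambda>i\<in>{1..Suc n}. \<epsilon> i \<omega>)" by (rule gc) auto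
    moreover have "Sx a \<alpha> y0 (\<lambda>t. \<epsilon> t \<omega>) (Suc n) = Sx a \<alpha> y0 (\<lambda>i\<in>{1..Suc n}. \<epsilon> i \<omega>) (Suc n)"
      by (rule Sx_cong) auto
    ultimately show ?thesis by (simp add: F_def)
  qed
  have Hr: "H (\<lambda>t. \<epsilon> t \<omega>) = H (\<lambda>i\<in>{1..n}. \<epsilon> i \<omega>)" for \<omega>
  proof -
    have "g (\<lambda>t. \<epsilon> t \<omega>) = g (\<lambda>i\<in>{1..n}. \<epsilon> i \<omega>)" by (rule gc) auto
    moreover have "Sx a \<alpha> y0 (\<lambda>t. \<epsilon> t \<omega>) n = Sx a \<alpha> y0 (\<lambda>i\<in>{1..n}. \<epsilon> i \<omega>) n"
      by (rule Sx_cong) auto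
    ultimately show ?thesis by (simp add: H_def)
  qed
  have ins: "{1..Suc n} = insert (Suc n) {1..n}" by auto
  have gm': "g \<in> borel_measurable (PiM {1..Suc n} (\<lambda>_. N01))"
  proof -
    have "(\<lambda>x. g (\<lambda>i\<in>{1..n}. x i)) \<in> borel_measurable (PiM {1..Suc n} (\<lambda>_. N01))"
      using measurable_comp[OF measurable_restrict_subset[of "{1..n}" "{1..Suc n}" "\<lambda>_. N01"] gm]
      by (simp add: comp_def)
    moreover have "(\<lambda>x. g (\<lambda>i\<in>{1..n}. x i)) = g" by (rule ext, rule gc) auto
    ultimately show ?thesis by simp
  qed
  have Fm: "F \<in> borel_measurable (PiM {1..Suc n} (\<lambda>_. N01))"
    unfolding F_def using gm' Sx_meas[of "Suc n" "{1..Suc n}" a \<alpha> y0] by measurable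
  have Hm: "H \<in> borel_measurable (PiM {1..n} (\<lambda>_. N01))"
    unfolding H_def using gm Sx_meas[of n "{1..n}" a \<alpha> y0] by measurable
  interpret P: product_sigma_finite "\<lambda>_::nat. N01"
    by (intro product_sigma_finite.intro sf_N01)
  have inner: "(\<integral>\<^sup>+z. F (x(Suc n := z)) \<partial>N01) = H x" for x
  proof -
    define G where "G = Gamma0 \<alpha> y0 x n"
    define Mm where "Mm = Gamma1 \<alpha> y0 x n - \<alpha> * Gamma0 \<alpha> y0 x n"
    define Y where "Y = ar_path \<alpha> y0 x n"
    have agree: "\<And>s. 1 \<le> s \<Longrightarrow> s \<le> n \<Longrightarrow> (x(Suc n := z)) s = x s" for z by auto
    have Fx: "F (x(Suc n := z)) = ennreal (g x * Sf a (G + Y\<^sup>2) (Mm + Y * z))" for z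
    proof -
      have "g (x(Suc n := z)) = g x" by (rule gc) (rule agree)
      moreover have "Gamma0 \<alpha> y0 (x(Suc n := z)) n = G" unfolding G_def by (rule Gamma0_cong) (rule agree)
      moreover have "Gamma1 \<alpha> y0 (x(Suc n := z)) n = Gamma1 \<alpha> y0 x n" by (rule Gamma1_cong) (rule agree)
      moreover have "ar_path \<alpha> y0 (x(Suc n := z)) n = Y" unfolding Y_def by (rule ar_path_cong) (rule agree)
      ultimately show ?thesis unfolding F_def Sx_Suc Mm_def by (simp add: G_def)
    qed
    have "(\<integral>\<^sup>+z. F (x(Suc n := z)) \<partial>N01) = (\<integral>\<^sup>+z. ennreal (g x * Sf a (G + Y\<^sup>2) (Mm + Y * z)) \<partial>N01)"
      unfolding Fx ..
    also have "\<dots> = (\<integral>\<^sup>+z. ennreal (std_normal_density z) * ennreal (g x * Sf a (G + Y\<^sup>2) (Mm + Y * z)) \<partial>lborel)"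
      by (rule N01_integral) (unfold Sf_def, measurable)
    also have "\<dots> = (\<integral>\<^sup>+z. ennreal (g x) * ennreal (std_normal_density z * Sf a (G + Y\<^sup>2) (Mm + Y * z)) \<partial>lborel)"
      using g0[of x] by (intro nn_integral_cong) (simp add: ennreal_mult'[symmetric] mult_ac)
    also have "\<dots> = ennreal (g x) * ennreal (Sf a G Mm)"
    proof -
      have meas: "(\<lambda>z. ennreal (std_normal_density z * Sf a (G + Y\<^sup>2) (Mm + Y * z))) \<in> borel_measurable lborel"
        unfolding Sf_def by measurable
      show ?thesis by (subst nn_integral_cmult[OF meas]) (simp add: gauss_integral G_def Gamma0_nonneg)
    qed
    also have "\<dots> = H x"
      unfolding H_def Sx_Sf G_def Mm_def using g0[of x] by (simp add: ennreal_mult')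
    finally show ?thesis .
  qed
  have "(\<integral>\<^sup>+\<omega>. F (\<lambda>t. \<epsilon> t \<omega>) \<partial>M) = (\<integral>\<^sup>+x. F x \<partial>PiM {1..Suc n} (\<lambda>_. N01))"
    unfolding Fr by (rule transfer[OF _ _ Fm]) auto
  also have "\<dots> = (\<integral>\<^sup>+x. (\<integral>\<^sup>+z. F (x(Suc n := z)) \<partial>N01) \<partial>PiM {1..n} (\<lambda>_. N01))"
    unfolding ins by (rule P.product_nn_integral_insert) (use Fm ins in auto)
  also have "\<dots> = (\<integral>\<^sup>+x. H x \<partial>PiM {1..n} (\<lambda>_. N01))"
    unfolding inner ..
  also have "\<dots> = (\<integral>\<^sup>+\<omega>. H (\<lambda>t. \<epsilon> t \<omega>) \<partial>M)"
    unfolding Hr by (rule transfer[OF _ _ Hm, symmetric]) auto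
  finally show ?thesis unfolding F_def H_def .
qed

end

context arsetup
begin

definition gi :: "real \<Rightarrow> real \<Rightarrow> real \<Rightarrow> real \<Rightarrow> nat \<Rightarrow> (nat \<Rightarrow> real) \<Rightarrow> real" where
  "gi a \<alpha> y0 c n x = (if stay a \<alpha> y0 c x n then 1 else 0)"

lemma gi_meas: "{1..n} \<subseteq> I \<Longrightarrow> gi a \<alpha> y0 c n \<in> borel_measurable (PiM I (\<lambda>_. N01))"
proof -
  assume "{1..n} \<subseteq> I"
  from stay_meas[OF this, of a \<alpha> y0 c] show ?thesis
    unfolding gi_def[abs_def] by measurable
qed

lemma gi_cong: "(\<And>s. 1 \<le> s \<Longrightarrow> s \<le> n \<Longrightarrow> x s = x' s) \<Longrightarrow> gi a \<alpha> y0 c n x = gi a \<alpha> y0 c n x'"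
  unfolding gi_def using stay_cong by metis

lemma Zp_int: "(\<integral>\<^sup>+\<omega>. ennreal (Zp a \<alpha> y0 c (\<lambda>t. \<epsilon> t \<omega>) n) \<partial>M) = 1"
proof (induction n)
  case 0 then show ?case by (simp add: Sx_0 emeasure_space_1)
next
  case (Suc n)
  let ?g = "gi a \<alpha> y0 c n"
  have p1: "ennreal (Zp a \<alpha> y0 c x (Suc n)) = ennreal (?g x * Sx a \<alpha> y0 x (Suc n)) + ennreal ((1 - ?g x) * Zp a \<alpha> y0 c x n)" for x
    by (simp add: gi_def)
  have p2: "ennreal (Zp a \<alpha> y0 c x n) = ennreal (?g x * Sx a \<alpha> y0 x n) + ennreal ((1 - ?g x) * Zp a \<alpha> y0 c x n)" for x
    by (simp add: gi_def Zp_stay)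
  have m1: "(\<lambda>\<omega>. ennreal (?g (\<lambda>t. \<epsilon> t \<omega>) * Sx a \<alpha> y0 (\<lambda>t. \<epsilon> t \<omega>) (Suc n))) \<in> borel_measurable M"
  proof (rule meas_M[where n="Suc n" and f="\<lambda>x. ennreal (?g x * Sx a \<alpha> y0 x (Suc n))"])
    show "(\<lambda>x. ennreal (?g x * Sx a \<alpha> y0 x (Suc n))) \<in> borel_measurable (PiM {1..Suc n} (\<lambda>_. N01))"
      using gi_meas[of n "{1..Suc n}" a \<alpha> y0 c] Sx_meas[of "Suc n" "{1..Suc n}" a \<alpha> y0] by measurable
  next
    fix x x' :: "nat \<Rightarrow> real" assume h: "\<And>s. 1 \<le> s \<Longrightarrow> s \<le> Suc n \<Longrightarrow> x s = x' s"
    have "?g x = ?g x'" by (rule gi_cong) (use h in auto)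
    moreover have "Sx a \<alpha> y0 x (Suc n) = Sx a \<alpha> y0 x' (Suc n)" by (rule Sx_cong) (use h in auto)
    ultimately show "ennreal (?g x * Sx a \<alpha> y0 x (Suc n)) = ennreal (?g x' * Sx a \<alpha> y0 x' (Suc n))" by simp
  qed
  have m2: "(\<lambda>\<omega>. ennreal (?g (\<lambda>t. \<epsilon> t \<omega>) * Sx a \<alpha> y0 (\<lambda>t. \<epsilon> t \<omega>) n)) \<in> borel_measurable M"
  proof (rule meas_M[where n="n" and f="\<lambda>x. ennreal (?g x * Sx a \<alpha> y0 x n)"])
    show "(\<lambda>x. ennreal (?g x * Sx a \<alpha> y0 x n)) \<in> borel_measurable (PiM {1..n} (\<lambda>_. N01))"
      using gi_meas[of n "{1..n}" a \<alpha> y0 c] Sx_meas[of "n" "{1..n}" a \<alpha> y0] by measurable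
  next
    fix x x' :: "nat \<Rightarrow> real" assume h: "\<And>s. 1 \<le> s \<Longrightarrow> s \<le> n \<Longrightarrow> x s = x' s"
    have "?g x = ?g x'" by (rule gi_cong) (use h in auto)
    moreover have "Sx a \<alpha> y0 x n = Sx a \<alpha> y0 x' n" by (rule Sx_cong) (use h in auto)
    ultimately show "ennreal (?g x * Sx a \<alpha> y0 x n) = ennreal (?g x' * Sx a \<alpha> y0 x' n)" by simp
  qed
  have m3: "(\<lambda>\<omega>. ennreal ((1 - ?g (\<lambda>t. \<epsilon> t \<omega>)) * Zp a \<alpha> y0 c (\<lambda>t. \<epsilon> t \<omega>) n)) \<in> borel_measurable M"
  proof (rule meas_M[where n="n" and f="\<lambda>x. ennreal ((1 - ?g x) * Zp a \<alpha> y0 c x n)"])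
    show "(\<lambda>x. ennreal ((1 - ?g x) * Zp a \<alpha> y0 c x n)) \<in> borel_measurable (PiM {1..n} (\<lambda>_. N01))"
      using gi_meas[of n "{1..n}" a \<alpha> y0 c] Zp_meas[of "n" "{1..n}" a \<alpha> y0 c] by measurable
  next
    fix x x' :: "nat \<Rightarrow> real" assume h: "\<And>s. 1 \<le> s \<Longrightarrow> s \<le> n \<Longrightarrow> x s = x' s"
    have "?g x = ?g x'" by (rule gi_cong) (use h in auto)
    moreover have "Zp a \<alpha> y0 c x n = Zp a \<alpha> y0 c x' n" by (rule Zp_cong) (use h in auto)
    ultimately show "ennreal ((1 - ?g x) * Zp a \<alpha> y0 c x n) = ennreal ((1 - ?g x') * Zp a \<alpha> y0 c x' n)" by simp
  qed
  have K: "(\<integral>\<^sup>+\<omega>. ennreal (?g (\<lambda>t. \<epsilon> t \<omega>) * Sx a \<alpha> y0 (\<lambda>t. \<epsilon> t \<omega>) (Suc n)) \<partial>M) =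
         (\<integral>\<^sup>+\<omega>. ennreal (?g (\<lambda>t. \<epsilon> t \<omega>) * Sx a \<alpha> y0 (\<lambda>t. \<epsilon> t \<omega>) n) \<partial>M)"
  proof (rule key)
    show "?g \<in> borel_measurable (PiM {1..n} (\<lambda>_. N01))" by (rule gi_meas) simp
    show "\<And>x. 0 \<le> ?g x" by (simp add: gi_def)
    show "\<And>x x'. (\<And>s. 1 \<le> s \<Longrightarrow> s \<le> n \<Longrightarrow> x s = x' s) \<Longrightarrow> ?g x = ?g x'" by (rule gi_cong)
  qed
  have "(\<integral>\<^sup>+\<omega>. ennreal (Zp a \<alpha> y0 c (\<lambda>t. \<epsilon> t \<omega>) (Suc n)) \<partial>M) =
     (\<integral>\<^sup>+\<omega>. ennreal (?g (\<lambda>t. \<epsilon> t \<omega>) * Sx a \<alpha> y0 (\<lambda>t. \<epsilon> t \<omega>) (Suc n)) \<partial>M) +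
     (\<integral>\<^sup>+\<omega>. ennreal ((1 - ?g (\<lambda>t. \<epsilon> t \<omega>)) * Zp a \<alpha> y0 c (\<lambda>t. \<epsilon> t \<omega>) n) \<partial>M)"
    unfolding p1 by (rule nn_integral_add[OF m1 m3])
  also have "\<dots> = (\<integral>\<^sup>+\<omega>. ennreal (?g (\<lambda>t. \<epsilon> t \<omega>) * Sx a \<alpha> y0 (\<lambda>t. \<epsilon> t \<omega>) n) \<partial>M) +
     (\<integral>\<^sup>+\<omega>. ennreal ((1 - ?g (\<lambda>t. \<epsilon> t \<omega>)) * Zp a \<alpha> y0 c (\<lambda>t. \<epsilon> t \<omega>) n) \<partial>M)"
    unfolding K ..
  also have "\<dots> = (\<integral>\<^sup>+\<omega>. ennreal (Zp a \<alpha> y0 c (\<lambda>t. \<epsilon> t \<omega>) n) \<partial>M)"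
    unfolding p2 by (rule nn_integral_add[OF m2 m3, symmetric])
  finally show ?case using Suc by simp
qed

lemma Bset_sets: "{\<omega> \<in> space M. \<not> stay a \<alpha> y0 c (\<lambda>t. \<epsilon> t \<omega>) n} \<in> sets M"
proof -
  have m: "(\<lambda>\<omega>. gi a \<alpha> y0 c n (\<lambda>t. \<epsilon> t \<omega>)) \<in> borel_measurable M"
    by (rule meas_M[OF gi_meas[OF order_refl]]) (rule gi_cong)
  have "{\<omega> \<in> space M. \<not> stay a \<alpha> y0 c (\<lambda>t. \<epsilon> t \<omega>) n} = (\<lambda>\<omega>. gi a \<alpha> y0 c n (\<lambda>t. \<epsilon> t \<omega>)) -` {0} \<inter> space M"
    by (auto simp: gi_def)
  also have "\<dots> \<in> sets M" by (rule measurable_sets[OF m]) simp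
  finally show ?thesis .
qed

lemma ville_finite:
  assumes c: "c > 0"
  shows "ennreal c * emeasure M {\<omega> \<in> space M. \<not> stay a \<alpha> y0 c (\<lambda>t. \<epsilon> t \<omega>) n} \<le> 1"
proof -
  let ?B = "{\<omega> \<in> space M. \<not> stay a \<alpha> y0 c (\<lambda>t. \<epsilon> t \<omega>) n}"
  have "ennreal c * emeasure M ?B = (\<integral>\<^sup>+\<omega>. ennreal c * indicator ?B \<omega> \<partial>M)"
    by (rule nn_integral_cmult_indicator[symmetric]) (rule Bset_sets)
  also have "\<dots> \<le> (\<integral>\<^sup>+\<omega>. ennreal (Zp a \<alpha> y0 c (\<lambda>t. \<epsilon> t \<omega>) n) \<partial>M)"
  proof (rule nn_integral_mono)
    fix \<omega> assume "\<omega> \<in> space M"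
    show "ennreal c * indicator ?B \<omega> \<le> ennreal (Zp a \<alpha> y0 c (\<lambda>t. \<epsilon> t \<omega>) n)"
    proof (cases "\<omega> \<in> ?B")
      case True
      then have "c \<le> Zp a \<alpha> y0 c (\<lambda>t. \<epsilon> t \<omega>) n" using Zp_ge[of c] c by auto
      then show ?thesis using True by (simp add: ennreal_leI)
    next
      case False then show ?thesis by simp
    qed
  qed
  also have "\<dots> = 1" by (rule Zp_int)
  finally show ?thesis .
qed

end

lemma (in arsetup) part2:
  assumes a: "a > 0" and d: "0 < \<delta>" "\<delta> < 1"
  shows "measure M {\<omega> \<in> space M. \<forall>T\<ge>1.
            \<alpha> \<in> conf_set a \<delta> (Gamma0 \<alpha> y0 (\<lambda>t. \<epsilon> t \<omega>) T)
                              (Gamma1 \<alpha> y0 (\<lambda>t. \<epsilon> t \<omega>) T)} \<ge> 1 - \<delta>"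
proof -
  define c where "c = 1 / \<delta>"
  have c: "c > 0" using d by (simp add: c_def)
  define B where "B n = {\<omega> \<in> space M. \<not> stay a \<alpha> y0 c (\<lambda>t. \<epsilon> t \<omega>) n}" for n
  have Bs: "B n \<in> sets M" for n unfolding B_def by (rule Bset_sets)
  have Ble: "emeasure M (B n) \<le> ennreal \<delta>" for n
  proof -
    have 1: "ennreal \<delta> * ennreal c = 1" using d by (simp add: c_def ennreal_mult'[symmetric])
    have "emeasure M (B n) = ennreal \<delta> * (ennreal c * emeasure M (B n))"
      by (simp add: mult.assoc[symmetric] 1)
    also have "\<dots> \<le> ennreal \<delta> * 1"
      by (rule mult_left_mono) (use ville_finite[OF c, of a \<alpha> y0 n] in \<open>simp_all add: B_def\<close>)
    finally show ?thesis by simp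
  qed
  have inc: "incseq B"
    by (rule incseq_SucI) (auto simp: B_def)
  have U: "emeasure M (\<Union>n. B n) \<le> ennreal \<delta>"
    using SUP_emeasure_incseq[of B, OF _ inc] Bs Ble by (metis SUP_least image_subset_iff rangeI subsetI)
  have Us: "(\<Union>n. B n) \<in> sets M" using Bs by blast
  have A: "{\<omega> \<in> space M. \<forall>T\<ge>1. \<alpha> \<in> conf_set a \<delta> (Gamma0 \<alpha> y0 (\<lambda>t. \<epsilon> t \<omega>) T)
                              (Gamma1 \<alpha> y0 (\<lambda>t. \<epsilon> t \<omega>) T)} = space M - (\<Union>n. B n)"
  proof -
    have "\<alpha> \<in> conf_set a \<delta> (Gamma0 \<alpha> y0 x T) (Gamma1 \<alpha> y0 x T) \<longleftrightarrow> Sx a \<alpha> y0 x T \<le> c" for x T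
      by (simp add: conf_set_def Sx_def c_def)
    moreover have "(\<forall>T\<ge>1. Sx a \<alpha> y0 x T \<le> c) \<longleftrightarrow> (\<forall>n. stay a \<alpha> y0 c x n)" for x
      unfolding stay_iff by (meson atLeastAtMost_iff order_refl)
    ultimately show ?thesis by (auto simp: B_def)
  qed
  have "measure M (\<Union>n. B n) \<le> \<delta>"
    using U d by (simp add: emeasure_eq_measure)
  then show ?thesis unfolding A prob_compl[OF Us] by simp
qed

theorem mainTheorem3:
  fixes a \<delta> y0 :: real
    and M :: "'w measure" and \<epsilon> :: "nat \<Rightarrow> 'w \<Rightarrow> real"
  assumes a_pos: "a > 0"
    and delta: "0 < \<delta>" "\<delta> < 1"
    and prob: "prob_space M"
    and indep: "prob_space.indep_vars M (\<lambda>_. borel) \<epsilon> {1..}"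
    and normal: "\<And>t. t \<ge> 1 \<Longrightarrow> distributed M lborel (\<epsilon> t) std_normal_density"
  shows
    "(\<forall>\<alpha> (e :: nat \<Rightarrow> real) T. T \<ge> 1 \<longrightarrow> Gamma0 \<alpha> y0 e T > 0 \<longrightarrow>
        conf_set a \<delta> (Gamma0 \<alpha> y0 e T) (Gamma1 \<alpha> y0 e T) =
        {\<beta>. \<bar>\<beta> - Gamma1 \<alpha> y0 e T / Gamma0 \<alpha> y0 e T\<bar> \<le>
              sqrt ((a\<^sup>2 * Gamma0 \<alpha> y0 e T + 1) / (a\<^sup>2 * (Gamma0 \<alpha> y0 e T)\<^sup>2)
                    * ln ((a\<^sup>2 * Gamma0 \<alpha> y0 e T + 1) / \<delta>\<^sup>2))})
     \<and> (\<forall>\<alpha>. measure M {\<omega> \<in> space M. \<forall>T\<ge>1.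
            \<alpha> \<in> conf_set a \<delta> (Gamma0 \<alpha> y0 (\<lambda>t. \<epsilon> t \<omega>) T)
                              (Gamma1 \<alpha> y0 (\<lambda>t. \<epsilon> t \<omega>) T)} \<ge> 1 - \<delta>)"
proof (intro conjI allI impI)
  fix \<alpha> :: real and e :: "nat \<Rightarrow> real" and T :: nat
  assume "Gamma0 \<alpha> y0 e T > 0"
  then show "conf_set a \<delta> (Gamma0 \<alpha> y0 e T) (Gamma1 \<alpha> y0 e T) =
        {\<beta>. \<bar>\<beta> - Gamma1 \<alpha> y0 e T / Gamma0 \<alpha> y0 e T\<bar> \<le>
              sqrt ((a\<^sup>2 * Gamma0 \<alpha> y0 e T + 1) / (a\<^sup>2 * (Gamma0 \<alpha> y0 e T)\<^sup>2)
                    * ln ((a\<^sup>2 * Gamma0 \<alpha> y0 e T + 1) / \<delta>\<^sup>2))}"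
    by (rule part1[OF a_pos delta])
next
  fix \<alpha> :: real
  interpret arsetup M \<epsilon>
    by (rule arsetup.intro[OF prob arsetup_axioms.intro[OF indep normal]])
  show "measure M {\<omega> \<in> space M. \<forall>T\<ge>1.
            \<alpha> \<in> conf_set a \<delta> (Gamma0 \<alpha> y0 (\<lambda>t. \<epsilon> t \<omega>) T)
                              (Gamma1 \<alpha> y0 (\<lambda>t. \<epsilon> t \<omega>) T)} \<ge> 1 - \<delta>"
    by (rule part2[OF a_pos delta])
qed

end
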